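(* Let $g\ge1$, $n=g+1$, $B\in\mathbb Z^{g\times n}$ with $B_{i,1}=1$, $B_{i,i+1}=-1$ and other entries $0$, and $Q=BB^T$. Let $\mathbf a$ be a vertex of the Voronoi polytope $V_Q$. Then $$\{B^T\mathbf c:\mathbf c\in\mathcal D_{\mathbf a,Q}\}=\mathcal D_{B^T\mathbf a,I_n}\cap H,$$ where $H=\{\mathbf x\in\mathbb R^n:\sum_{i=1}^nx_i=0\}$.
   Context: $V_Q=\{\mathbf a\in\mathbb R^g:\ \mathbf a^TQ\mathbf a\le(\mathbf a-\mathbf c)^TQ(\mathbf a-\mathbf c)\ \forall\mathbf c\in\mathbb Z^g\}$. For a vertex $\mathbf a$, $\mathcal D_{\mathbf a,Q}=\{\mathbf c\in\mathbb Z^g:\ \mathbf a^TQ\mathbf a=(\mathbf a-\mathbf c)^TQ(\mathbf a-\mathbf c)\}$. For $\mathbf b\in\mathbb R^n$, $\mathcal D_{\mathbf b,I_n}=\{\mathbf c\in\mathbb Z^n:\ \mathbf b^T\mathbf b=(\mathbf b-\mathbf c)^T(\mathbf b-\mathbf c)\}$ (Euclidean metric). The hyperplane $H$ is the space of real 1-cycles $H_1(\Gamma,\mathbb R)$ of the banana graph (the kernel of the edge Laplacian) in edge coordinates. *)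

theory Defs
  imports "HOL-Analysis.Analysis"
begin

text \<open>Index conventions: the g rows of B are indexed by a finite type 'g (so g = CARD('g) \<ge> 1),
  the n = g+1 columns by 'g option: column None is column 1, column Some i is column i+1.\<close>

definition bananaB :: "real ^ ('g::finite option) ^ 'g" where
  "bananaB = (\<chi> i j. if j = None then 1 else if j = Some i then -1 else 0)"

definition bananaQ :: "real ^ 'g ^ ('g::finite)" where
  "bananaQ = bananaB ** transpose bananaB"

definition qform :: "real ^ 'n ^ 'n \<Rightarrow> real ^ ('n::finite) \<Rightarrow> real" where
  "qform Q x = x \<bullet> (Q *v x)"

definition int_vec :: "real ^ ('n::finite) \<Rightarrow> bool" where
  "int_vec c \<longleftrightarrow> (\<forall>i. c $ i \<in> \<int>)"

definition voronoi :: "real ^ 'n ^ 'n \<Rightarrow> (real ^ ('n::finite)) set" where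
  "voronoi Q = {a. \<forall>c. int_vec c \<longrightarrow> qform Q a \<le> qform Q (a - c)}"

definition Dset :: "real ^ ('n::finite) \<Rightarrow> real ^ 'n ^ 'n \<Rightarrow> (real ^ 'n) set" where
  "Dset a Q = {c. int_vec c \<and> qform Q a = qform Q (a - c)}"

definition zero_sum_hyperplane :: "(real ^ ('n::finite)) set" where
  "zero_sum_hyperplane = {x. (\<Sum>j\<in>UNIV. x $ j) = 0}"

end

theory Submission
  imports Defs
begin

lemma sum_option_UNIV:
  fixes f :: "'g::finite option \<Rightarrow> real"
  shows "(\<Sum>j\<in>UNIV. f j) = f None + (\<Sum>k\<in>UNIV. f (Some k))"
proof -
  have "(UNIV :: 'g option set) = insert None (Some ` UNIV)" by (rule UNIV_option_conv)
  then have "(\<Sum>j\<in>UNIV. f j) = (\<Sum>j\<in>insert None (Some ` UNIV). f j)" by simp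
  also have "\<dots> = f None + (\<Sum>j\<in>Some ` UNIV. f j)" by (subst sum.insert) auto
  also have "(\<Sum>j\<in>Some ` UNIV. f j) = (\<Sum>k\<in>UNIV. f (Some k))"
    by (subst sum.reindex) (auto simp: inj_on_def)
  finally show ?thesis .
qed

lemma BT_None:
  "(transpose (bananaB :: real ^ ('g::finite option) ^ 'g) *v v) $ None = (\<Sum>i\<in>UNIV. v $ i)"
  by (simp add: matrix_vector_mult_def transpose_def bananaB_def)

lemma BT_Some:
  "(transpose (bananaB :: real ^ ('g::finite option) ^ 'g) *v v) $ Some k = - v $ k"
proof -
  have "(transpose (bananaB :: real ^ ('g::finite option) ^ 'g) *v v) $ Some k
      = (\<Sum>i\<in>UNIV. (if k = i then -1 else 0) * v $ i)"
    by (simp add: matrix_vector_mult_def transpose_def bananaB_def)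
  also have "\<dots> = - v $ k"
  proof -
    have "(\<lambda>i. (if k = i then -1 else 0) * v $ i) = (\<lambda>i. if k = i then - v $ i else 0)"
      by auto
    show ?thesis unfolding \<open>(\<lambda>i. _) = _\<close> by (simp add: sum.delta)
  qed
  finally show ?thesis .
qed

lemma qform_Q:
  "qform (bananaQ :: real ^ 'g ^ ('g::finite)) x
   = qform (mat 1) (transpose (bananaB :: real ^ ('g option) ^ 'g) *v x)"
proof -
  have "qform (bananaQ :: real ^ 'g ^ ('g::finite)) x
     = x \<bullet> ((bananaB :: real ^ ('g option) ^ 'g) *v (transpose bananaB *v x))"
    by (simp add: qform_def bananaQ_def matrix_vector_mul_assoc[symmetric] del: transpose_matrix_vector)
  also have "\<dots> = (x v* (bananaB :: real ^ ('g option) ^ 'g)) \<bullet> (transpose bananaB *v x)"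
    by (simp add: dot_lmul_matrix)
  also have "\<dots> = qform (mat 1) (transpose (bananaB :: real ^ ('g option) ^ 'g) *v x)"
    by (simp add: qform_def transpose_matrix_vector)
  finally show ?thesis .
qed

lemma BT_sum_zero:
  "(\<Sum>j\<in>UNIV. (transpose (bananaB :: real ^ ('g::finite option) ^ 'g) *v v) $ j) = 0"
  by (simp add: sum_option_UNIV BT_None BT_Some sum_negf del: transpose_matrix_vector)

lemma BT_int:
  assumes "int_vec (v :: real ^ ('g::finite))"
  shows "int_vec (transpose (bananaB :: real ^ ('g option) ^ 'g) *v v)"
  unfolding int_vec_def
proof
  fix j :: "'g option"
  show "(transpose (bananaB :: real ^ ('g option) ^ 'g) *v v) $ j \<in> \<int>"
  proof (cases j)
    case None
    then show ?thesis using assms by (simp add: BT_None int_vec_def Ints_sum del: transpose_matrix_vector)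
  next
    case (Some k)
    then show ?thesis using assms by (simp add: BT_Some int_vec_def del: transpose_matrix_vector)
  qed
qed

theorem proposition3p8:
  fixes a :: "real ^ ('g::finite)"
  assumes "a extreme_point_of voronoi (bananaQ :: real ^ 'g ^ 'g)"
  shows "(\<lambda>c. transpose (bananaB :: real ^ ('g option) ^ 'g) *v c) ` Dset a bananaQ
         = Dset (transpose (bananaB :: real ^ ('g option) ^ 'g) *v a) (mat 1) \<inter> zero_sum_hyperplane"
proof
  let ?B = "bananaB :: real ^ ('g option) ^ 'g"
  show "(\<lambda>c. transpose ?B *v c) ` Dset a bananaQ
         \<subseteq> Dset (transpose ?B *v a) (mat 1) \<inter> zero_sum_hyperplane"
  proof
    fix y assume "y \<in> (\<lambda>c. transpose ?B *v c) ` Dset a bananaQ"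
    then obtain c where c: "c \<in> Dset a bananaQ" and y: "y = transpose ?B *v c" by auto
    have "int_vec y" using c y BT_int by (auto simp: Dset_def)
    moreover have "qform (mat 1) (transpose ?B *v a) = qform (mat 1) (transpose ?B *v a - y)"
      using c y qform_Q[of a] qform_Q[of "a - c"]
      by (simp add: Dset_def matrix_vector_mult_diff_distrib)
    moreover have "y \<in> zero_sum_hyperplane"
      using y BT_sum_zero by (simp add: zero_sum_hyperplane_def)
    ultimately show "y \<in> Dset (transpose ?B *v a) (mat 1) \<inter> zero_sum_hyperplane"
      by (simp add: Dset_def)
  qed
next
  let ?B = "bananaB :: real ^ ('g option) ^ 'g"
  show "Dset (transpose ?B *v a) (mat 1) \<inter> zero_sum_hyperplane
        \<subseteq> (\<lambda>c. transpose ?B *v c) ` Dset a bananaQ"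
  proof
    fix y assume yin: "y \<in> Dset (transpose ?B *v a) (mat 1) \<inter> zero_sum_hyperplane"
    define c :: "real ^ 'g" where "c = (\<chi> k. - y $ Some k)"
    have sz: "y $ None + (\<Sum>k\<in>UNIV. y $ Some k) = 0"
      using yin sum_option_UNIV[of "\<lambda>j. y $ j"] by (simp add: zero_sum_hyperplane_def)
    have yc: "y = transpose ?B *v c"
    proof (rule vec_eq_iff[THEN iffD2], rule allI)
      fix j :: "'g option"
      show "y $ j = (transpose ?B *v c) $ j"
      proof (cases j)
        case None
        then show ?thesis using sz by (simp add: BT_None c_def sum_negf del: transpose_matrix_vector)
      next
        case (Some k)
        then show ?thesis by (simp add: BT_Some c_def del: transpose_matrix_vector)
      qed
    qed
    have ci: "int_vec c" using yin by (simp add: c_def Dset_def int_vec_def)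
    have "qform bananaQ a = qform bananaQ (a - c)"
      using yin yc qform_Q[of a] qform_Q[of "a - c"]
      by (simp add: Dset_def matrix_vector_mult_diff_distrib)
    then have "c \<in> Dset a bananaQ" using ci by (simp add: Dset_def)
    then show "y \<in> (\<lambda>c. transpose ?B *v c) ` Dset a bananaQ" using yc by blast
  qed
qed

end
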